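(* Let $(\mathcal{L},\mathcal{D}(\mathcal{L}))$ be the generator of a $C_0$-contraction semigroup on a Banach space $\mathcal{X}$, $M\in\mathcal{B}(\mathcal{X})$ a contraction, and $P$ a projection with $\|M^n-P\|_\infty\le\delta^n$ for some $\delta\in(0,1)$ and all $n\in\mathbb{N}$. Assume there is $b\ge0$ such that $\|Pe^{t\mathcal{L}}(\mathbf{1}-P)\|_\infty\le tb$ and $\|(\mathbf{1}-P)e^{t\mathcal{L}}P\|_\infty\le tb$ for all $t\ge0$, and that $(P\mathcal{L}P,\mathcal{D}(\mathcal{L}P))$ is the generator of a $C_0$-semigroup. Then for all $n\in\mathbb{N}$ and all $x\in\mathcal{X}$ $$\Big\|\big(Me^{\frac1n\mathcal{L}}\big)^nx-\big(Pe^{\frac1n\mathcal{L}}P\big)^nx\Big\|\le\Big(\delta^n+\frac bn+\frac1n\,\frac{b(2+b)(\delta-\delta^n)}{1-\delta}e^{2b}\Big)\|x\|.$$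
   Context: $\mathcal{B}(\mathcal{X})$: bounded operators with operator norm $\|\cdot\|_\infty$; $\mathbf{1}$ the identity; contraction: norm at most $1$; projection: bounded idempotent. A $C_0$-contraction semigroup is a strongly continuous semigroup of contractions, denoted $e^{t\mathcal{L}}$ by its generator. $\mathcal{D}(\mathcal{L}P)=\{x:Px\in\mathcal{D}(\mathcal{L})\}$. *)

theory Defs
  imports "HOL-Analysis.Analysis"
begin

fun blpow :: "('a::real_normed_vector \<Rightarrow>\<^sub>L 'a) \<Rightarrow> nat \<Rightarrow> ('a \<Rightarrow>\<^sub>L 'a)" where
  "blpow A 0 = id_blinfun"
| "blpow A (Suc n) = A o\<^sub>L blpow A n"

text \<open>Strongly continuous (C_0) semigroup of bounded operators, indexed by t \<ge> 0
  (values at negative times are irrelevant).\<close>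
definition C0_semigroup :: "(real \<Rightarrow> ('a::real_normed_vector \<Rightarrow>\<^sub>L 'a)) \<Rightarrow> bool" where
  "C0_semigroup T \<longleftrightarrow>
     T 0 = id_blinfun \<and>
     (\<forall>s\<ge>0. \<forall>t\<ge>0. T (s + t) = T s o\<^sub>L T t) \<and>
     (\<forall>x. ((\<lambda>t. T t x) \<longlongrightarrow> x) (at_right 0))"

definition C0_contraction_semigroup :: "(real \<Rightarrow> ('a::real_normed_vector \<Rightarrow>\<^sub>L 'a)) \<Rightarrow> bool" where
  "C0_contraction_semigroup T \<longleftrightarrow> C0_semigroup T \<and> (\<forall>t\<ge>0. norm (T t) \<le> 1)"

definition is_generator ::
  "(real \<Rightarrow> ('a::real_normed_vector \<Rightarrow>\<^sub>L 'a)) \<Rightarrow> 'a set \<Rightarrow> ('a \<Rightarrow> 'a) \<Rightarrow> bool" where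
  "is_generator T D L \<longleftrightarrow>
     D = {x. \<exists>y. ((\<lambda>h. (1 / h) *\<^sub>R (T h x - x)) \<longlongrightarrow> y) (at_right 0)} \<and>
     (\<forall>x\<in>D. ((\<lambda>h. (1 / h) *\<^sub>R (T h x - x)) \<longlongrightarrow> L x) (at_right 0))"

end

theory Submission
  imports Defs
begin

lemma blpow_norm_le1:
  fixes A :: "'a::real_normed_vector \<Rightarrow>\<^sub>L 'a"
  assumes "norm A \<le> 1"
  shows "norm (blpow A n x) \<le> norm x"
proof (induction n)
  case 0
  then show ?case by simp
next
  case (Suc n)
  have "norm (blpow A (Suc n) x) = norm (A (blpow A n x))" by simp
  also have "\<dots> \<le> norm A * norm (blpow A n x)" by (rule norm_blinfun)
  also have "\<dots> \<le> 1 * norm x" using assms Suc by (intro mult_mono) auto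
  finally show ?case by simp
qed

lemma blpow_comm:
  fixes A :: "'a::real_normed_vector \<Rightarrow>\<^sub>L 'a"
  shows "blpow A n (A x) = A (blpow A n x)"
  by (induction n) auto

lemma small_le0:
  fixes c K \<delta> :: real
  assumes "0 < \<delta>" "\<delta> < 1" "\<And>n. n \<ge> 1 \<Longrightarrow> c \<le> K * \<delta> ^ n"
  shows "c \<le> 0"
proof -
  have "(\<lambda>n. K * \<delta> ^ n) \<longlonglongrightarrow> K * 0"
    by (intro tendsto_mult tendsto_const LIMSEQ_power_zero) (use assms in auto)
  then have "(\<lambda>n. K * \<delta> ^ n) \<longlonglongrightarrow> 0" by simp
  then show ?thesis
    by (rule LIMSEQ_le_const) (use assms in auto)
qed

theorem lemma5p2:
  fixes T :: "real \<Rightarrow> ('a::banach \<Rightarrow>\<^sub>L 'a)"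
    and D :: "'a set" and L :: "'a \<Rightarrow> 'a"
    and M P :: "'a \<Rightarrow>\<^sub>L 'a"
    and \<delta> b :: real
  assumes sg: "C0_contraction_semigroup T"
    and gen: "is_generator T D L"
    and M_contr: "norm M \<le> 1"
    and P_proj: "P o\<^sub>L P = P"
    and \<delta>: "0 < \<delta>" "\<delta> < 1"
    and conv: "\<forall>n\<ge>1. norm (blpow M n - P) \<le> \<delta> ^ n"
    and b: "b \<ge> 0"
    and b1: "\<forall>t\<ge>0. norm (P o\<^sub>L T t o\<^sub>L (id_blinfun - P)) \<le> t * b"
    and b2: "\<forall>t\<ge>0. norm ((id_blinfun - P) o\<^sub>L T t o\<^sub>L P) \<le> t * b"
    and PLP: "\<exists>S. C0_semigroup S \<and> is_generator S {x. P x \<in> D} (\<lambda>x. P (L (P x)))"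
  shows "\<forall>n\<ge>1. \<forall>x.
    norm (blpow (M o\<^sub>L T (1 / real n)) n x - blpow (P o\<^sub>L T (1 / real n) o\<^sub>L P) n x)
      \<le> (\<delta> ^ n + b / real n
          + (1 / real n) * (b * (2 + b) * (\<delta> - \<delta> ^ n) / (1 - \<delta>)) * exp (2 * b)) * norm x"
proof -
  have PP: "P (P z) = P z" for z using P_proj by (metis blinfun_apply_blinfun_compose)
  have conv': "norm (blpow M n - P) \<le> \<delta> ^ n" if "n \<ge> 1" for n using conv that by auto
  have Mid: "M o\<^sub>L id_blinfun = M" by (rule blinfun_eqI) simp
  have Rn: "norm (M - P) \<le> \<delta>" using conv'[of 1] by (simp add: Mid)
  have MPn: "norm (blpow M n y) \<le> norm y" for n y using blpow_norm_le1[OF M_contr] .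
  have Pnorm: "norm P \<le> 1"
  proof -
    have "norm P - 1 \<le> 1 * \<delta> ^ n" if "n \<ge> 1" for n
    proof -
      have "norm (blpow M n) \<le> 1"
        by (rule norm_blinfun_bound) (use MPn in auto)
      moreover have "norm P \<le> norm (blpow M n) + norm (blpow M n - P)"
        using norm_triangle_ineq2[of P "blpow M n"] norm_minus_commute[of P "blpow M n"] by linarith
      ultimately show ?thesis using conv'[OF that] by simp
    qed
    from small_le0[OF \<delta> this] show ?thesis by simp
  qed
  have MP: "M (P z) = P z" for z
  proof -
    have "norm ((M o\<^sub>L P) - P) \<le> 2 * \<delta> ^ n" if "n \<ge> 1" for n
    proof -
      have e: "(M o\<^sub>L P) - P = (M o\<^sub>L (P - blpow M n)) + (blpow M (Suc n) - P)"
        by (rule blinfun_eqI) (simp add: blinfun.diff_left blinfun.diff_right blinfun.add_left)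
      have "norm (M o\<^sub>L (P - blpow M n)) \<le> norm M * norm (P - blpow M n)"
        by (rule norm_blinfun_compose)
      also have "\<dots> \<le> 1 * \<delta> ^ n" using M_contr conv'[OF that]
        by (intro mult_mono) (auto simp: norm_minus_commute)
      finally have 1: "norm (M o\<^sub>L (P - blpow M n)) \<le> \<delta> ^ n" by simp
      have "norm (blpow M (Suc n) - P) \<le> \<delta> ^ Suc n" using conv'[of "Suc n"] by simp
      also have "\<dots> \<le> \<delta> ^ n" using \<delta> by (simp add: power_decreasing)
      finally have 2: "norm (blpow M (Suc n) - P) \<le> \<delta> ^ n" .
      have "norm ((M o\<^sub>L P) - P) \<le> norm (M o\<^sub>L (P - blpow M n)) + norm (blpow M (Suc n) - P)"
        by (subst e) (rule norm_triangle_ineq)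
      with 1 2 show ?thesis by linarith
    qed
    from small_le0[OF \<delta> this] have "M o\<^sub>L P = P" by simp
    then show ?thesis by (metis blinfun_apply_blinfun_compose)
  qed
  have PM: "P (M z) = P z" for z
  proof -
    have "norm ((P o\<^sub>L M) - P) \<le> 2 * \<delta> ^ n" if "n \<ge> 1" for n
    proof -
      have e: "(P o\<^sub>L M) - P = ((P - blpow M n) o\<^sub>L M) + (blpow M (Suc n) - P)"
        by (rule blinfun_eqI) (simp add: blinfun.diff_left blinfun.diff_right blinfun.add_left blpow_comm)
      have "norm ((P - blpow M n) o\<^sub>L M) \<le> norm (P - blpow M n) * norm M"
        by (rule norm_blinfun_compose)
      also have "\<dots> \<le> \<delta> ^ n * 1" using M_contr conv'[OF that]
        by (intro mult_mono) (use \<delta> in \<open>auto simp: norm_minus_commute\<close>)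
      finally have 1: "norm ((P - blpow M n) o\<^sub>L M) \<le> \<delta> ^ n" by simp
      have "norm (blpow M (Suc n) - P) \<le> \<delta> ^ Suc n" using conv'[of "Suc n"] by simp
      also have "\<dots> \<le> \<delta> ^ n" using \<delta> by (simp add: power_decreasing)
      finally have 2: "norm (blpow M (Suc n) - P) \<le> \<delta> ^ n" .
      have "norm ((P o\<^sub>L M) - P) \<le> norm ((P - blpow M n) o\<^sub>L M) + norm (blpow M (Suc n) - P)"
        by (subst e) (rule norm_triangle_ineq)
      with 1 2 show ?thesis by linarith
    qed
    from small_le0[OF \<delta> this] have "P o\<^sub>L M = P" by simp
    then show ?thesis by (metis blinfun_apply_blinfun_compose)
  qed
  show ?thesis
  proof (intro allI impI)
    fix n :: nat and x :: 'a
    assume n: "n \<ge> 1"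
    define t where "t = 1 / real n"
    have t0: "t \<ge> 0" unfolding t_def by simp
    define Tt where "Tt = T t"
    have Tn: "norm Tt \<le> 1" using sg t0 unfolding Tt_def C0_contraction_semigroup_def by auto
    define e where "e = b / real n"
    have e0: "e \<ge> 0" using b unfolding e_def by simp
    have et: "t * b = e" unfolding t_def e_def by simp
    have PTQ: "norm (P (Tt (y - P y))) \<le> e * norm y" for y
    proof -
      have "norm (P (Tt (y - P y))) = norm ((P o\<^sub>L T t o\<^sub>L (id_blinfun - P)) y)"
        by (simp add: Tt_def blinfun.diff_left)
      also have "\<dots> \<le> norm (P o\<^sub>L T t o\<^sub>L (id_blinfun - P)) * norm y" by (rule norm_blinfun)
      also have "\<dots> \<le> e * norm y" using b1 t0 et by (intro mult_right_mono) auto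
      finally show ?thesis .
    qed
    have QTP: "norm (Tt (P y) - P (Tt (P y))) \<le> e * norm y" for y
    proof -
      have "norm (Tt (P y) - P (Tt (P y))) = norm (((id_blinfun - P) o\<^sub>L T t o\<^sub>L P) y)"
        by (simp add: Tt_def blinfun.diff_left)
      also have "\<dots> \<le> norm ((id_blinfun - P) o\<^sub>L T t o\<^sub>L P) * norm y" by (rule norm_blinfun)
      also have "\<dots> \<le> e * norm y" using b2 t0 et by (intro mult_right_mono) auto
      finally show ?thesis .
    qed
    have normle: "norm (F y) \<le> c * w" if "norm F \<le> c" "norm y \<le> w" for F :: "'a \<Rightarrow>\<^sub>L 'a" and c w :: real and y
    proof -
      have "norm (F y) \<le> norm F * norm y" by (rule norm_blinfun)
      also have "\<dots> \<le> c * w" using that by (intro mult_mono) (auto intro: order_trans[OF norm_ge_zero])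
      finally show ?thesis .
    qed
    define A where "A = M o\<^sub>L Tt"
    define B where "B = P o\<^sub>L Tt o\<^sub>L P"
    define R where "R = M - P"
    have RnR: "norm R \<le> \<delta>" using Rn by (simp add: R_def)
    have An: "norm A \<le> 1" unfolding A_def
      using norm_blinfun_compose[of M Tt] M_contr Tn
      by (smt (verit, ccfv_SIG) mult_le_one norm_ge_zero)
    have RP: "R (P z) = 0" for z unfolding R_def by (simp add: blinfun.diff_left MP PP)
    have Bdiff: "norm (B u - B v) \<le> norm (u - v)" for u v
    proof -
      have "B u - B v = P (Tt (P (u - v)))" by (simp add: B_def blinfun.diff_right)
      also have "norm \<dots> \<le> 1 * norm (u - v)"
        using normle[OF Pnorm normle[OF Tn normle[OF Pnorm order_refl]]] by simp
      finally show ?thesis by simp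
    qed
    have hPA: "P (A y) = B (P y) + P (Tt (y - P y))" for y
      by (simp add: A_def B_def PM PP blinfun.diff_right)
    have hQA0: "A y - P (A y) = R (Tt y)" for y
      by (simp add: A_def R_def PM blinfun.diff_left)
    have hQA1: "norm (A y - P (A y)) \<le> \<delta> * norm y" for y
      unfolding hQA0 using normle[OF RnR normle[OF Tn order_refl]] by simp
    have hQA2: "norm (A y - P (A y)) \<le> \<delta> * e * norm y + \<delta> * norm (y - P y)" for y
    proof -
      have "R (Tt y) = R (Tt (P y) - P (Tt (P y))) + R (Tt (y - P y))"
        by (simp add: RP blinfun.diff_right blinfun.add_right)
      then have "norm (R (Tt y)) \<le> norm (R (Tt (P y) - P (Tt (P y)))) + norm (R (Tt (y - P y)))"
        by (metis norm_triangle_ineq)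
      also have "\<dots> \<le> \<delta> * (e * norm y) + \<delta> * norm (y - P y)"
      proof (intro add_mono)
        have "norm (R (Tt (P y) - P (Tt (P y)))) \<le> norm R * norm (Tt (P y) - P (Tt (P y)))"
          by (rule norm_blinfun)
        also have "\<dots> \<le> \<delta> * (e * norm y)" using RnR QTP \<delta> by (intro mult_mono) auto
        finally show "norm (R (Tt (P y) - P (Tt (P y)))) \<le> \<delta> * (e * norm y)" .
        show "norm (R (Tt (y - P y))) \<le> \<delta> * norm (y - P y)"
          using normle[OF RnR normle[OF Tn order_refl]] by simp
      qed
      finally show ?thesis unfolding hQA0 by (simp add: algebra_simps)
    qed
    define xk where "xk k = blpow A k x" for k
    have xk_Suc: "xk (Suc k) = A (xk k)" for k by (simp add: xk_def)
    have xk_n: "norm (xk k) \<le> norm x" for k unfolding xk_def by (rule blpow_norm_le1[OF An])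
    define s where "s k = (\<delta> - \<delta> ^ k) / (1 - \<delta>)" for k :: nat
    have s1: "s 1 = 0" "s (Suc 0) = 0" by (simp_all add: s_def)
    have sSuc: "s (Suc k) = s k + \<delta> ^ k" for k
      using \<delta> by (simp add: s_def field_simps)
    have sSuc2: "s (Suc k) = \<delta> + \<delta> * s k" for k
      using \<delta> by (simp add: s_def field_simps)
    have s_mono: "s k \<le> s n" if "k \<le> n" for k
      using \<delta> that by (simp add: s_def divide_right_mono power_decreasing)
    have s0: "s k \<ge> 0" if "k \<ge> 1" for k
      using \<delta> that by (simp add: s_def power_le_one_iff power_decreasing[of 1 k \<delta>, simplified])
    have nx: "norm x \<ge> 0" by simp
    have F4: "norm (xk k - P (xk k)) \<le> (\<delta> ^ k + e * s k) * norm x" if "k \<ge> 1" for k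
      using that
    proof (induction k rule: dec_induct)
      case base
      then show ?case using hQA1[of x] by (simp add: xk_def s1)
    next
      case (step k)
      have "norm (xk (Suc k) - P (xk (Suc k))) \<le> \<delta> * e * norm (xk k) + \<delta> * norm (xk k - P (xk k))"
        unfolding xk_Suc by (rule hQA2)
      also have "\<dots> \<le> \<delta> * e * norm x + \<delta> * ((\<delta> ^ k + e * s k) * norm x)"
        using \<delta> e0 xk_n[of k] step.IH by (intro add_mono mult_left_mono) auto
      also have "\<dots> = (\<delta> ^ Suc k + e * s (Suc k)) * norm x"
        by (simp add: sSuc2 algebra_simps)
      finally show ?case .
    qed
    have F5: "norm (P (xk k) - blpow B k x) \<le> (e + e * s k + e * e * (real k - 1) * s n) * norm x"
      if "k \<ge> 1" "k \<le> n" for k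
      using that
    proof (induction k rule: dec_induct)
      case base
      have "P (xk 1) - blpow B 1 x = P (Tt (x - P x))"
        using hPA[of x] by (simp add: xk_def B_def PP)
      then show ?case using PTQ[of x] by (simp add: s1)
    next
      case (step k)
      have kn: "k \<le> n" using step by simp
      have "P (xk (Suc k)) - blpow B (Suc k) x
          = (B (P (xk k)) - B (blpow B k x)) + P (Tt (xk k - P (xk k)))"
        unfolding xk_Suc hPA by simp
      also have "P (Tt (xk k - P (xk k))) = P (Tt ((xk k - P (xk k)) - P (xk k - P (xk k))))"
        by (simp add: blinfun.diff_right PP)
      finally have eq: "P (xk (Suc k)) - blpow B (Suc k) x =
         (B (P (xk k)) - B (blpow B k x)) + P (Tt ((xk k - P (xk k)) - P (xk k - P (xk k))))" .
      have "norm (P (xk (Suc k)) - blpow B (Suc k) x) \<le>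
          norm (B (P (xk k)) - B (blpow B k x)) + norm (P (Tt ((xk k - P (xk k)) - P (xk k - P (xk k)))))"
        unfolding eq by (rule norm_triangle_ineq)
      also have "\<dots> \<le> (e + e * s k + e * e * (real k - 1) * s n) * norm x + e * ((\<delta> ^ k + e * s k) * norm x)"
        using Bdiff[of "P (xk k)" "blpow B k x"] step.IH[OF kn] PTQ[of "xk k - P (xk k)"]
          F4[OF step.hyps(1)] e0
        by (intro add_mono) (auto intro: order_trans mult_left_mono)
      also have "\<dots> \<le> (e + e * s (Suc k) + e * e * (real (Suc k) - 1) * s n) * norm x"
      proof -
        have "e * e * s k \<le> e * e * s n" using s_mono[OF kn] e0 by (simp add: mult_left_mono)
        then have "e * e * s k * norm x \<le> e * e * s n * norm x" using nx by (rule mult_right_mono)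
        then show ?thesis by (simp add: sSuc algebra_simps)
      qed
      finally show ?case .
    qed
    have "xk n - blpow B n x = (xk n - P (xk n)) + (P (xk n) - blpow B n x)" by simp
    then have "norm (xk n - blpow B n x) \<le> norm (xk n - P (xk n)) + norm (P (xk n) - blpow B n x)"
      by (metis norm_triangle_ineq)
    also have "\<dots> \<le> (\<delta> ^ n + e * s n) * norm x + (e + e * s n + e * e * (real n - 1) * s n) * norm x"
      using F4[OF n] F5[OF n order_refl] by (rule add_mono)
    also have "\<dots> = (\<delta> ^ n + e + e * s n * (2 + e * (real n - 1))) * norm x"
      by (simp add: algebra_simps)
    also have "\<dots> \<le> (\<delta> ^ n + e + e * s n * (2 + b) * exp (2 * b)) * norm x"
    proof -
      have "e * (real n - 1) \<le> b" using n b unfolding e_def by (simp add: field_simps)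
      then have "e * s n * (2 + e * (real n - 1)) \<le> e * s n * (2 + b)"
        using e0 s0[OF n] by (intro mult_left_mono) auto
      also have "\<dots> \<le> e * s n * (2 + b) * exp (2 * b)"
      proof -
        have nn: "0 \<le> e * s n * (2 + b)" using e0 s0[OF n] b by simp
        have "e * s n * (2 + b) * 1 \<le> e * s n * (2 + b) * exp (2 * b)"
          by (rule mult_left_mono) (use nn b in auto)
        then show ?thesis by simp
      qed
      finally show ?thesis using nx by (intro mult_right_mono) auto
    qed
    also have "\<dots> = (\<delta> ^ n + b / real n
          + (1 / real n) * (b * (2 + b) * (\<delta> - \<delta> ^ n) / (1 - \<delta>)) * exp (2 * b)) * norm x"
      by (simp add: e_def s_def)
    finally show "norm (blpow (M o\<^sub>L T (1 / real n)) n x - blpow (P o\<^sub>L T (1 / real n) o\<^sub>L P) n x)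
      \<le> (\<delta> ^ n + b / real n
          + (1 / real n) * (b * (2 + b) * (\<delta> - \<delta> ^ n) / (1 - \<delta>)) * exp (2 * b)) * norm x"
      by (simp add: xk_def A_def B_def Tt_def t_def)
  qed
qed

end
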